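(* Let $(A,E)$ be the direct producted noncommutative probability space over $D_N$ of noncommutative probability spaces $(A_1,\varphi_1),\dots,(A_N,\varphi_N)$. For $j=1,\dots,N$ let $A_j'=\{(0,\dots,0,a_j,0,\dots,0):a_j\in A_j\}\subset A$ be the embedding of $A_j$ into the $j$-th coordinate. Then $A_1',\dots,A_N'$ are free over $D_N$ in $(A,E)$.
   Context: Each $(A_j,\varphi_j)$ is a unital complex algebra with a linear functional. $A=\times_{j=1}^N A_j$ with componentwise operations; $D_N=\mathbb{C}^N$ with componentwise operations, identified with the central subalgebra $\{(\alpha_1 1,\dots,\alpha_N 1)\}$ of $A$; $E((a_1,\dots,a_N))=(\varphi_1(a_1),\dots,\varphi_N(a_N))$. $D_N$-valued cumulants: $k_n(y_1,\dots,y_n)=\sum_{\pi\in NC(n)}\prod_{V\in\pi}E(\prod_{l\in V}y_l)\,\mu(\pi,1_n)$. Subsets $S_1,\dots,S_N$ of $A$ are free over $D_N$ if all mixed $D_N$-valued cumulants of elements of the algebras generated by $S_i\cup D_N$ vanish. *)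

theory Defs
  imports Complex_Main "HOL-Library.Disjoint_Sets"
begin

definition unital_calg ::
  "'a set \<Rightarrow> ('a \<Rightarrow> 'a \<Rightarrow> 'a) \<Rightarrow> ('a \<Rightarrow> 'a \<Rightarrow> 'a) \<Rightarrow> (complex \<Rightarrow> 'a \<Rightarrow> 'a)
    \<Rightarrow> 'a \<Rightarrow> 'a \<Rightarrow> bool" where
  "unital_calg C ad mu sm z u \<longleftrightarrow>
     z \<in> C \<and> u \<in> C \<and>
     (\<forall>a\<in>C. \<forall>b\<in>C. ad a b \<in> C \<and> mu a b \<in> C) \<and>
     (\<forall>c. \<forall>a\<in>C. sm c a \<in> C) \<and>
     (\<forall>a\<in>C. \<forall>b\<in>C. \<forall>d\<in>C. ad (ad a b) d = ad a (ad b d)) \<and>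
     (\<forall>a\<in>C. \<forall>b\<in>C. ad a b = ad b a) \<and>
     (\<forall>a\<in>C. ad z a = a) \<and>
     (\<forall>a\<in>C. \<exists>b\<in>C. ad a b = z) \<and>
     (\<forall>a\<in>C. \<forall>b\<in>C. \<forall>d\<in>C. mu (mu a b) d = mu a (mu b d)) \<and>
     (\<forall>a\<in>C. mu u a = a \<and> mu a u = a) \<and>
     (\<forall>a\<in>C. \<forall>b\<in>C. \<forall>d\<in>C. mu a (ad b d) = ad (mu a b) (mu a d)
                          \<and> mu (ad a b) d = ad (mu a d) (mu b d)) \<and>
     (\<forall>a\<in>C. sm 1 a = a) \<and>
     (\<forall>c e. \<forall>a\<in>C. sm (c * e) a = sm c (sm e a)) \<and>
     (\<forall>c e. \<forall>a\<in>C. sm (c + e) a = ad (sm c a) (sm e a)) \<and>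
     (\<forall>c. \<forall>a\<in>C. \<forall>b\<in>C. sm c (ad a b) = ad (sm c a) (sm c b)) \<and>
     (\<forall>c. \<forall>a\<in>C. \<forall>b\<in>C. mu (sm c a) b = sm c (mu a b) \<and> mu a (sm c b) = sm c (mu a b))"

definition nc_prob_space ::
  "'a set \<Rightarrow> ('a \<Rightarrow> 'a \<Rightarrow> 'a) \<Rightarrow> ('a \<Rightarrow> 'a \<Rightarrow> 'a) \<Rightarrow> (complex \<Rightarrow> 'a \<Rightarrow> 'a)
    \<Rightarrow> 'a \<Rightarrow> 'a \<Rightarrow> ('a \<Rightarrow> complex) \<Rightarrow> bool" where
  "nc_prob_space C ad mu sm z u phi \<longleftrightarrow>
     unital_calg C ad mu sm z u \<and>
     (\<forall>a\<in>C. \<forall>b\<in>C. phi (ad a b) = phi a + phi b) \<and>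
     (\<forall>c. \<forall>a\<in>C. phi (sm c a) = c * phi a) \<and>
     phi u = 1"

definition noncrossing :: "nat set set \<Rightarrow> bool" where
  "noncrossing P \<longleftrightarrow>
     (\<forall>V\<in>P. \<forall>W\<in>P. \<forall>a b c d. a < b \<and> b < c \<and> c < d \<and> a \<in> V \<and> c \<in> V
        \<and> b \<in> W \<and> d \<in> W \<longrightarrow> V = W)"

text \<open>NC(n): non-crossing partitions of {0..<n} (positions 0..n-1 stand for 1..n).\<close>
definition NC :: "nat \<Rightarrow> nat set set set" where
  "NC n = {P. partition_on {0..<n} P \<and> noncrossing P}"

definition refines :: "nat set set \<Rightarrow> nat set set \<Rightarrow> bool" where
  "refines P Q \<longleftrightarrow> (\<forall>V\<in>P. \<exists>W\<in>Q. V \<subseteq> W)"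

definition one_part :: "nat \<Rightarrow> nat set set" where
  "one_part n = (if n = 0 then {} else {{0..<n}})"

text \<open>The recursion is run with a fuel parameter; every strict chain in NC(n) has length
  at most n, so fuel n+1 suffices for the recursion to bottom out correctly.\<close>
fun mob_aux :: "nat \<Rightarrow> nat \<Rightarrow> nat set set \<Rightarrow> int" where
  "mob_aux 0 n P = 0"
| "mob_aux (Suc k) n P =
     (if P = one_part n then 1
      else - (\<Sum>Q\<in>{Q\<in>NC n. refines P Q \<and> Q \<noteq> P}. mob_aux k n Q))"

definition mobius_NC :: "nat \<Rightarrow> nat set set \<Rightarrow> int" where
  "mobius_NC n P = mob_aux (Suc n) n P"

text \<open>Index type 'i is the finite set {1..N}. Algebra j has carrier C j and operations
  ad j, mu j, sm j, z j, u j on a common element type 'a. Elements of A are functions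
  'i \<Rightarrow> 'a with componentwise operations; D_N = ('i \<Rightarrow> complex).\<close>

definition prodA_carrier :: "('i \<Rightarrow> 'a set) \<Rightarrow> ('i \<Rightarrow> 'a) set" where
  "prodA_carrier C = {x. \<forall>j. x j \<in> C j}"

text \<open>Embedding of D_N as the central subalgebra {(alpha_1 1,...,alpha_N 1)}.\<close>
definition embD :: "('i \<Rightarrow> complex \<Rightarrow> 'a \<Rightarrow> 'a) \<Rightarrow> ('i \<Rightarrow> 'a) \<Rightarrow> ('i \<Rightarrow> complex) \<Rightarrow> ('i \<Rightarrow> 'a)" where
  "embD sm u d = (\<lambda>j. sm j (d j) (u j))"

definition condE :: "('i \<Rightarrow> 'a \<Rightarrow> complex) \<Rightarrow> ('i \<Rightarrow> 'a) \<Rightarrow> ('i \<Rightarrow> complex)" where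
  "condE phi x = (\<lambda>j. phi j (x j))"

definition ordprodA :: "('i \<Rightarrow> 'a \<Rightarrow> 'a \<Rightarrow> 'a) \<Rightarrow> ('i \<Rightarrow> 'a) \<Rightarrow> (nat \<Rightarrow> ('i \<Rightarrow> 'a)) \<Rightarrow> nat set \<Rightarrow> ('i \<Rightarrow> 'a)" where
  "ordprodA mu u y V = (\<lambda>j. foldr (mu j) (map (\<lambda>l. y l j) (sorted_list_of_set V)) (u j))"

definition cumulant ::
  "('i \<Rightarrow> 'a \<Rightarrow> 'a \<Rightarrow> 'a) \<Rightarrow> ('i \<Rightarrow> 'a) \<Rightarrow> ('i \<Rightarrow> 'a \<Rightarrow> complex)
     \<Rightarrow> nat \<Rightarrow> (nat \<Rightarrow> ('i \<Rightarrow> 'a)) \<Rightarrow> ('i \<Rightarrow> complex)" where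
  "cumulant mu u phi n y =
     (\<lambda>j. \<Sum>P\<in>NC n. (\<Prod>V\<in>P. condE phi (ordprodA mu u y V) j) * of_int (mobius_NC n P))"

inductive_set gen_alg_D ::
  "('i \<Rightarrow> 'a \<Rightarrow> 'a \<Rightarrow> 'a) \<Rightarrow> ('i \<Rightarrow> 'a \<Rightarrow> 'a \<Rightarrow> 'a) \<Rightarrow> ('i \<Rightarrow> complex \<Rightarrow> 'a \<Rightarrow> 'a)
     \<Rightarrow> ('i \<Rightarrow> 'a) \<Rightarrow> ('i \<Rightarrow> 'a) \<Rightarrow> ('i \<Rightarrow> 'a) set \<Rightarrow> ('i \<Rightarrow> 'a) set"
  for ad mu sm z u S where
  gen: "x \<in> S \<Longrightarrow> x \<in> gen_alg_D ad mu sm z u S"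
| scal: "embD sm u d \<in> gen_alg_D ad mu sm z u S"
| zero: "z \<in> gen_alg_D ad mu sm z u S"
| add: "x \<in> gen_alg_D ad mu sm z u S \<Longrightarrow> y \<in> gen_alg_D ad mu sm z u S
          \<Longrightarrow> (\<lambda>j. ad j (x j) (y j)) \<in> gen_alg_D ad mu sm z u S"
| mult: "x \<in> gen_alg_D ad mu sm z u S \<Longrightarrow> y \<in> gen_alg_D ad mu sm z u S
          \<Longrightarrow> (\<lambda>j. mu j (x j) (y j)) \<in> gen_alg_D ad mu sm z u S"
| smul: "x \<in> gen_alg_D ad mu sm z u S
          \<Longrightarrow> (\<lambda>j. sm j c (x j)) \<in> gen_alg_D ad mu sm z u S"

text \<open>Subsets S_i (i \<in> 'i) of A are free over D_N: all mixed D_N-valued cumulants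
  of elements of the algebras generated by S_i \<union> D_N vanish.\<close>
definition free_over_D ::
  "('i \<Rightarrow> 'a \<Rightarrow> 'a \<Rightarrow> 'a) \<Rightarrow> ('i \<Rightarrow> 'a \<Rightarrow> 'a \<Rightarrow> 'a) \<Rightarrow> ('i \<Rightarrow> complex \<Rightarrow> 'a \<Rightarrow> 'a)
     \<Rightarrow> ('i \<Rightarrow> 'a) \<Rightarrow> ('i \<Rightarrow> 'a) \<Rightarrow> ('i \<Rightarrow> 'a \<Rightarrow> complex)
     \<Rightarrow> ('i \<Rightarrow> ('i \<Rightarrow> 'a) set) \<Rightarrow> bool" where
  "free_over_D ad mu sm z u phi S \<longleftrightarrow>
     (\<forall>n (c :: nat \<Rightarrow> 'i) y.
        (\<forall>l<n. y l \<in> gen_alg_D ad mu sm z u (S (c l))) \<and>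
        (\<exists>l1<n. \<exists>l2<n. c l1 \<noteq> c l2)
        \<longrightarrow> cumulant mu u phi n y = (\<lambda>_. 0))"

definition coord_embed :: "('i \<Rightarrow> 'a set) \<Rightarrow> ('i \<Rightarrow> 'a) \<Rightarrow> 'i \<Rightarrow> ('i \<Rightarrow> 'a) set" where
  "coord_embed C z j = {x. x j \<in> C j \<and> (\<forall>i. i \<noteq> j \<longrightarrow> x i = z i)}"

end

theory Submission
  imports Defs
begin

lemma part_unique:
  assumes "partition_on A Q" "x \<in> W" "W \<in> Q" "x \<in> W'" "W' \<in> Q"
  shows "W = W'"
  using assms unfolding partition_on_def disjoint_def by blast

lemma refines_card_less:
  assumes PA: "partition_on A P" and QA: "partition_on A Q" and fin: "finite A"
    and r: "refines P Q" and ne: "P \<noteq> Q"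
  shows "card Q < card P"
proof -
  have finP: "finite P" using finite_elements[OF fin PA] .
  define f where "f V = (THE W. W \<in> Q \<and> V \<subseteq> W)" for V
  have fV: "f V \<in> Q \<and> V \<subseteq> f V" if VP: "V \<in> P" for V
  proof -
    obtain W where W: "W \<in> Q" "V \<subseteq> W" using r VP unfolding refines_def by blast
    have "V \<noteq> {}" using partition_onD3[OF PA] that by auto
    then obtain x where "x \<in> V" by auto
    have "\<exists>!W. W \<in> Q \<and> V \<subseteq> W"
    proof (rule ex1I[of _ W])
      show "W \<in> Q \<and> V \<subseteq> W" using W by simp
      fix W' assume "W' \<in> Q \<and> V \<subseteq> W'"
      then show "W' = W" using part_unique[OF QA, of x W' W] W \<open>x \<in> V\<close> by auto
    qed
    from theI'[OF this] show ?thesis unfolding f_def by simp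
  qed
  have surj: "f ` P = Q"
  proof
    show "f ` P \<subseteq> Q" using fV by auto
    show "Q \<subseteq> f ` P"
    proof
      fix W assume W: "W \<in> Q"
      have "W \<noteq> {}" using partition_onD3[OF QA] W by auto
      then obtain x where x: "x \<in> W" by auto
      have "x \<in> A" using partition_onD1[OF QA] W x by blast
      then obtain V where V: "V \<in> P" "x \<in> V" using partition_onD1[OF PA] by blast
      have "f V = W" using fV[OF V(1)] V(2) x W part_unique[OF QA, of x "f V" W] by auto
      then show "W \<in> f ` P" using V by auto
    qed
  qed
  have le: "card Q \<le> card P" using card_image_le[OF finP, of f] surj by simp
  show ?thesis
  proof (rule ccontr)
    assume "\<not> card Q < card P"
    then have "card (f ` P) = card P" using le surj by simp
    then have inj: "inj_on f P" using eq_card_imp_inj_on[OF finP] by blast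
    have "f V = V" if V: "V \<in> P" for V
    proof -
      have "f V \<subseteq> V"
      proof
        fix x assume x: "x \<in> f V"
        have "x \<in> A" using partition_onD1[OF QA] fV[OF V] x by blast
        then obtain V' where V': "V' \<in> P" "x \<in> V'" using partition_onD1[OF PA] by blast
        have "f V' = f V" using fV[OF V'(1)] fV[OF V] V'(2) x part_unique[OF QA, of x "f V'" "f V"] by auto
        then have "V' = V" using inj V V'(1) unfolding inj_on_def by blast
        then show "x \<in> V" using V' by simp
      qed
      then show ?thesis using fV[OF V] by blast
    qed
    then have "f ` P = P" by simp
    then show False using surj ne by simp
  qed
qed

lemma NC_finite: "finite (NC n)"
proof -
  have "NC n \<subseteq> {P. partition_on {0..<n} P}" unfolding NC_def by auto
  then show ?thesis using finitely_many_partition_on[of "{0..<n}"] finite_subset by auto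
qed

lemma NC_part: "P \<in> NC n \<Longrightarrow> partition_on {0..<n} P"
  unfolding NC_def by auto

lemma NC_card_le: "P \<in> NC n \<Longrightarrow> card P \<le> n"
proof -
  assume P: "P \<in> NC n"
  have PA: "partition_on {0..<n} P" using NC_part[OF P] .
  have finP: "finite P" using finite_elements[OF _ PA] by simp
  define g where "g V = (SOME x. x \<in> V)" for V :: "nat set"
  have g: "g V \<in> V" if "V \<in> P" for V
  proof -
    have "V \<noteq> {}" using partition_onD3[OF PA] that by auto
    then show ?thesis unfolding g_def by (simp add: some_in_eq)
  qed
  have "inj_on g P"
  proof (rule inj_onI)
    fix V W assume "V \<in> P" "W \<in> P" "g V = g W"
    then show "V = W" using part_unique[OF PA, of "g V" V W] g[of V] g[of W] by simp
  qed
  moreover have "g ` P \<subseteq> {0..<n}" using g partition_onD1[OF PA] by blast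
  ultimately show ?thesis using card_inj_on_le[of g P "{0..<n}"] by simp
qed

lemma NC_card_le1: "P \<in> NC n \<Longrightarrow> card P \<le> 1 \<Longrightarrow> P = one_part n"
proof -
  assume P: "P \<in> NC n" and c: "card P \<le> 1"
  have PA: "partition_on {0..<n} P" using NC_part[OF P] .
  have finP: "finite P" using finite_elements[OF _ PA] by simp
  show ?thesis
  proof (cases "card P = 0")
    case True
    then have "P = {}" using finP by simp
    then have "n = 0" using partition_onD1[OF PA] by simp
    then show ?thesis using \<open>P = {}\<close> unfolding one_part_def by simp
  next
    case False
    then have "card P = 1" using c by simp
    then obtain W where W: "P = {W}" using card_1_singletonE by blast
    then have "W = {0..<n}" "W \<noteq> {}" using partition_onD1[OF PA] partition_onD3[OF PA] by auto
    then show ?thesis using W unfolding one_part_def by auto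
  qed
qed

lemma refines_refl: "refines P P" unfolding refines_def by auto

lemma refines_trans: "refines P Q \<Longrightarrow> refines Q R \<Longrightarrow> refines P R"
  unfolding refines_def by (meson order_trans)

lemma mob_aux_fuel:
  assumes "Q \<in> NC n" "k \<ge> max 1 (card Q)" "k' \<ge> max 1 (card Q)"
  shows "mob_aux k n Q = mob_aux k' n Q"
  using assms
proof (induction k arbitrary: Q k')
  case 0
  then show ?case by simp
next
  case (Suc k1)
  obtain k1' where k': "k' = Suc k1'" using Suc.prems(3) by (cases k') auto
  show ?case
  proof (cases "Q = one_part n")
    case True
    then show ?thesis using k' by simp
  next
    case False
    then have c2: "card Q \<ge> 2" using NC_card_le1[OF Suc.prems(1)] by linarith
    have "(\<Sum>R\<in>{R\<in>NC n. refines Q R \<and> R \<noteq> Q}. mob_aux k1 n R)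
        = (\<Sum>R\<in>{R\<in>NC n. refines Q R \<and> R \<noteq> Q}. mob_aux k1' n R)"
    proof (rule sum.cong)
      fix R assume R: "R \<in> {R\<in>NC n. refines Q R \<and> R \<noteq> Q}"
      have "card R < card Q"
        using R refines_card_less[OF NC_part[OF Suc.prems(1)] NC_part, of R] by auto
      then show "mob_aux k1 n R = mob_aux k1' n R"
        using Suc.IH[of R k1'] R Suc.prems c2 k' by auto
    qed simp
    then show ?thesis using False k' by simp
  qed
qed

lemma mobius_rec:
  assumes P: "P \<in> NC n"
  shows "(\<Sum>Q\<in>{Q\<in>NC n. refines P Q}. mobius_NC n Q) = (if P = one_part n then 1 else 0)"
proof (cases "P = one_part n")
  case True
  have "{Q\<in>NC n. refines P Q} = {P}"
  proof -
    have "Q = P" if Q: "Q \<in> NC n" "refines P Q" for Q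
    proof (rule ccontr)
      assume "Q \<noteq> P"
      then have "card Q < card P"
        using refines_card_less[OF NC_part[OF P] NC_part[OF Q(1)]] Q by auto
      then have "card Q \<le> 1" using True unfolding one_part_def by (auto split: if_splits)
      then have "Q = one_part n" using NC_card_le1[OF Q(1)] by simp
      then show False using \<open>Q \<noteq> P\<close> True by simp
    qed
    then show ?thesis using P refines_refl by auto
  qed
  note S = this
  have M: "mobius_NC n P = 1" unfolding mobius_NC_def
    by (subst mob_aux.simps) (simp only: True refl if_True)
  show ?thesis by (simp only: S if_P[OF True]) (simp add: M)
next
  case False
  have n1: "n \<ge> 1"
  proof (rule ccontr)
    assume "\<not> n \<ge> 1"
    then have "n = 0" by simp
    then have "P = {}" using NC_part[OF P] by (simp add: partition_on_empty)
    then show False using False \<open>n = 0\<close> unfolding one_part_def by simp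
  qed
  have split: "{Q\<in>NC n. refines P Q} = insert P {Q\<in>NC n. refines P Q \<and> Q \<noteq> P}"
    using P refines_refl by auto
  have fin: "finite {Q\<in>NC n. refines P Q \<and> Q \<noteq> P}" using NC_finite by simp
  have eq: "(\<Sum>Q\<in>{Q\<in>NC n. refines P Q \<and> Q \<noteq> P}. mob_aux n n Q)
      = (\<Sum>Q\<in>{Q\<in>NC n. refines P Q \<and> Q \<noteq> P}. mobius_NC n Q)"
  proof (rule sum.cong)
    fix Q assume Q: "Q \<in> {Q\<in>NC n. refines P Q \<and> Q \<noteq> P}"
    have "card Q < card P"
      using Q refines_card_less[OF NC_part[OF P] NC_part, of Q] by auto
    then have "card Q \<le> n" using NC_card_le[OF P] by simp
    then show "mob_aux n n Q = mobius_NC n Q"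
      unfolding mobius_NC_def using mob_aux_fuel[of Q n n "Suc n"] Q n1 by auto
  qed simp
  have "mobius_NC n P = - (\<Sum>Q\<in>{Q\<in>NC n. refines P Q \<and> Q \<noteq> P}. mob_aux n n Q)"
    unfolding mobius_NC_def by (subst mob_aux.simps) (simp only: False if_False)
  then have "mobius_NC n P + (\<Sum>Q\<in>{Q\<in>NC n. refines P Q \<and> Q \<noteq> P}. mobius_NC n Q) = 0"
    using eq by simp
  moreover have "sum (mobius_NC n) (insert P {Q\<in>NC n. refines P Q \<and> Q \<noteq> P})
     = mobius_NC n P + (\<Sum>Q\<in>{Q\<in>NC n. refines P Q \<and> Q \<noteq> P}. mobius_NC n Q)"
    by (rule sum.insert[OF fin]) simp
  ultimately have "sum (mobius_NC n) {Q\<in>NC n. refines P Q} = 0"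
    unfolding split by linarith
  then show ?thesis using False by simp
qed

lemma part_disj:
  assumes "partition_on A P" "V \<in> P" "W \<in> P" "V \<noteq> W"
  shows "V \<inter> W = {}"
  using partition_onD2[OF assms(1), unfolded disjoint_def] assms(2-4) by simp

definition sp :: "nat \<Rightarrow> nat set set \<Rightarrow> nat set set" where
  "sp l0 P = ((\<lambda>V. V - {l0}) ` P - {{}}) \<union> {{l0}}"

lemma sp_NC:
  assumes P: "P \<in> NC n" and l0: "l0 < n"
  shows "sp l0 P \<in> NC n"
proof -
  have PA: "partition_on {0..<n} P" using NC_part[OF P] .
  have "partition_on {0..<n} (sp l0 P)"
  proof (rule partition_onI)
    show "\<Union>(sp l0 P) = {0..<n}"
      using partition_onD1[OF PA] l0 unfolding sp_def by auto
    show "{} \<notin> sp l0 P" unfolding sp_def by auto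
    fix p q assume p: "p \<in> sp l0 P" and q: "q \<in> sp l0 P" and pq: "p \<noteq> q"
    show "disjnt p q"
    proof (cases "p = {l0}")
      case True
      then have "q \<noteq> {l0}" using pq by simp
      then obtain W where "q = W - {l0}" using q unfolding sp_def by auto
      then show ?thesis using True by (auto simp: disjnt_def)
    next
      case False
      then obtain V where V: "V \<in> P" "p = V - {l0}" using p unfolding sp_def by auto
      show ?thesis
      proof (cases "q = {l0}")
        case True
        then show ?thesis using V by (auto simp: disjnt_def)
      next
        case False
        then obtain W where W: "W \<in> P" "q = W - {l0}" using q unfolding sp_def by auto
        have "V \<noteq> W" using V W pq by auto
        then have "disjnt V W" using part_disj[OF PA V(1) W(1)] unfolding disjnt_def by simp
        then show ?thesis using V W by (auto simp: disjnt_def)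
      qed
    qed
  qed
  moreover have "noncrossing (sp l0 P)"
    unfolding noncrossing_def
  proof (intro ballI allI impI)
    fix V' W' a b c d
    assume V': "V' \<in> sp l0 P" and W': "W' \<in> sp l0 P"
      and h: "a < b \<and> b < c \<and> c < d \<and> a \<in> V' \<and> c \<in> V' \<and> b \<in> W' \<and> d \<in> W'"
    have "V' \<noteq> {l0}" using h by auto
    then obtain V where V: "V \<in> P" "V' = V - {l0}" using V' unfolding sp_def by auto
    have "W' \<noteq> {l0}" using h by auto
    then obtain W where W: "W \<in> P" "W' = W - {l0}" using W' unfolding sp_def by auto
    have "V = W" using P V W h unfolding NC_def noncrossing_def by blast
    then show "V' = W'" using V W by simp
  qed
  ultimately show ?thesis unfolding NC_def by simp
qed

lemma sp_mem: "{l0} \<in> sp l0 P" unfolding sp_def by simp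

lemma sp_id:
  assumes S: "S \<in> NC n" and l: "{l0} \<in> S"
  shows "sp l0 S = S"
proof -
  have PA: "partition_on {0..<n} S" using NC_part[OF S] .
  have nl: "l0 \<notin> V" if "V \<in> S" "V \<noteq> {l0}" for V
    using part_unique[OF PA, of l0 V "{l0}"] that l by auto
  have "(\<lambda>V. V - {l0}) ` S - {{}} = S - {{l0}}"
  proof
    show "(\<lambda>V. V - {l0}) ` S - {{}} \<subseteq> S - {{l0}}"
    proof
      fix X assume "X \<in> (\<lambda>V. V - {l0}) ` S - {{}}"
      then obtain V where V: "V \<in> S" "X = V - {l0}" "X \<noteq> {}" by auto
      have "V \<noteq> {l0}" using V by auto
      then have "X = V" using nl[OF V(1)] V(2) by auto
      then show "X \<in> S - {{l0}}" using V \<open>V \<noteq> {l0}\<close> by auto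
    qed
    show "S - {{l0}} \<subseteq> (\<lambda>V. V - {l0}) ` S - {{}}"
    proof
      fix X assume X: "X \<in> S - {{l0}}"
      then have "X - {l0} = X" using nl by auto
      moreover have "X \<noteq> {}" using X partition_onD3[OF PA] by auto
      ultimately show "X \<in> (\<lambda>V. V - {l0}) ` S - {{}}" using X by (metis DiffD1 DiffI image_eqI singletonD)
    qed
  qed
  then show ?thesis unfolding sp_def using l by auto
qed

lemma ref_sp:
  assumes P: "P \<in> NC n" and l0: "l0 < n"
  shows "refines (sp l0 P) P"
  unfolding refines_def
proof
  fix X assume X: "X \<in> sp l0 P"
  show "\<exists>W\<in>P. X \<subseteq> W"
  proof (cases "X = {l0}")
    case True
    have "l0 \<in> {0..<n}" using l0 by simp
    then have "l0 \<in> \<Union>P" using partition_onD1[OF NC_part[OF P]] by simp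
    then show ?thesis using True by auto
  next
    case False
    then show ?thesis using X unfolding sp_def by auto
  qed
qed

lemma ref_sp2:
  assumes S: "S \<in> NC n" and l: "{l0} \<in> S" and r: "refines S Q"
  shows "refines S (sp l0 Q)"
  unfolding refines_def
proof
  fix V assume V: "V \<in> S"
  show "\<exists>W\<in>sp l0 Q. V \<subseteq> W"
  proof (cases "V = {l0}")
    case True
    then show ?thesis using sp_mem by blast
  next
    case False
    have PA: "partition_on {0..<n} S" using NC_part[OF S] .
    have nl: "l0 \<notin> V"
      using part_unique[OF PA, of l0 V "{l0}"] V False l by auto
    obtain W where W: "W \<in> Q" "V \<subseteq> W" using r V unfolding refines_def by blast
    have "V \<noteq> {}" using partition_onD3[OF PA] V by auto
    then have "W - {l0} \<in> sp l0 Q" using W nl unfolding sp_def by auto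
    moreover have "V \<subseteq> W - {l0}" using W nl by auto
    ultimately show ?thesis by blast
  qed
qed

lemma prod_sp:
  fixes H :: "nat set \<Rightarrow> complex"
  assumes P: "P \<in> NC n" and H: "\<And>V. H V = H (V - {l0})" and H0: "H {} = 1"
  shows "(\<Prod>V\<in>P. H V) = (\<Prod>V\<in>sp l0 P. H V)"
proof -
  have PA: "partition_on {0..<n} P" using NC_part[OF P] .
  have finP: "finite P" using finite_elements[OF _ PA] by simp
  have inj: "inj_on (\<lambda>V. V - {l0}) P"
  proof (rule inj_onI)
    fix V W assume V: "V \<in> P" and W: "W \<in> P" and e: "V - {l0} = W - {l0}"
    show "V = W"
    proof (rule ccontr)
      assume "V \<noteq> W"
      then have "V \<inter> W = {}" using part_disj[OF PA V W] by simp
      then have "V \<subseteq> {l0}" "W \<subseteq> {l0}" using e by auto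
      moreover have "V \<noteq> {}" "W \<noteq> {}" using partition_onD3[OF PA] V W by auto
      ultimately have "V = {l0}" "W = {l0}" by auto
      then show False using \<open>V \<noteq> W\<close> by simp
    qed
  qed
  let ?I = "(\<lambda>V. V - {l0}) ` P"
  have finI: "finite ?I" using finP by simp
  have H1: "H {l0} = 1" using H[of "{l0}"] H0 by simp
  have "(\<Prod>V\<in>P. H V) = (\<Prod>V\<in>P. H (V - {l0}))" using H by simp
  also have "\<dots> = (\<Prod>X\<in>?I. H X)" using prod.reindex[OF inj, of H] by simp
  also have "\<dots> = (\<Prod>X\<in>?I - {{}}. H X)"
  proof (cases "{} \<in> ?I")
    case True
    then show ?thesis using prod.remove[OF finI True, of H] H0 by simp
  next
    case False
    then show ?thesis by simp
  qed
  also have "\<dots> = H {l0} * (\<Prod>X\<in>?I - {{}}. H X)" using H1 by simp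
  also have "\<dots> = (\<Prod>X\<in>sp l0 P. H X)"
  proof -
    have "{l0} \<notin> ?I - {{}}" by auto
    then have "(\<Prod>X\<in>insert {l0} (?I - {{}}). H X) = H {l0} * (\<Prod>X\<in>?I - {{}}. H X)"
      using finI by simp
    moreover have "insert {l0} (?I - {{}}) = sp l0 P" unfolding sp_def by auto
    ultimately show ?thesis by simp
  qed
  finally show ?thesis .
qed

lemma sum_mob_zero:
  fixes H :: "nat set \<Rightarrow> complex"
  assumes n: "n \<ge> 2" and l0: "l0 < n"
    and H: "\<And>V. H V = H (V - {l0})" and H0: "H {} = 1"
  shows "(\<Sum>P\<in>NC n. (\<Prod>V\<in>P. H V) * of_int (mobius_NC n P)) = 0"
proof -
  define m :: "nat set set \<Rightarrow> complex" where "m P = of_int (mobius_NC n P)" for P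
  define N where "N = NC n"
  define T where "T = {S\<in>N. {l0} \<in> S}"
  define C where "C S = (\<Sum>P\<in>{P\<in>N. sp l0 P = S}. m P)" for S
  have finN: "finite N" unfolding N_def using NC_finite .
  have finT: "finite T" unfolding T_def using finN by simp
  have spT: "sp l0 P \<in> T" if "P \<in> N" for P
    using sp_NC[of P n l0] that l0 sp_mem unfolding T_def N_def by auto
  have rec0: "(\<Sum>Q\<in>{Q\<in>N. refines S Q}. m Q) = 0" if S: "S \<in> T" for S
  proof -
    have SN: "S \<in> NC n" using S unfolding T_def N_def by simp
    have "S \<noteq> one_part n"
    proof
      assume "S = one_part n"
      then have "S = {{0..<n}}" using n unfolding one_part_def by simp
      then have "{l0} = {0..<n}" using S unfolding T_def by auto
      then have "{0..<n} \<subseteq> {l0}" by simp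
      moreover have "0 \<in> {0..<n}" "1 \<in> {0..<n}" using n by auto
      ultimately have "0 = l0" "1 = l0" by blast+
      then show False by simp
    qed
    then have "(\<Sum>Q\<in>{Q\<in>NC n. refines S Q}. mobius_NC n Q) = 0" using mobius_rec[OF SN] by simp
    then have "of_int (\<Sum>Q\<in>{Q\<in>NC n. refines S Q}. mobius_NC n Q) = (0::complex)" by simp
    then show ?thesis unfolding m_def N_def by simp
  qed
  have Czero: "\<forall>S. S \<in> T \<longrightarrow> card S = k \<longrightarrow> C S = 0" for k
  proof (induction k rule: less_induct)
    case (less k)
    show ?case
    proof (intro allI impI)
      fix S assume S: "S \<in> T" and cS: "card S = k"
      have SN: "S \<in> NC n" and Sl: "{l0} \<in> S" using S unfolding T_def N_def by auto
      have seteq: "{Q\<in>N. refines S Q} = {Q\<in>N. refines S (sp l0 Q)}"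
      proof (intro Collect_cong conj_cong refl iffI)
        fix Q assume "Q \<in> N" "refines S Q"
        then show "refines S (sp l0 Q)" using ref_sp2[OF SN Sl] by blast
      next
        fix Q assume "Q \<in> N" "refines S (sp l0 Q)"
        then show "refines S Q" using ref_sp[of Q n l0] l0 refines_trans unfolding N_def by blast
      qed
      define T' where "T' = {S'\<in>T. refines S S'}"
      have finT': "finite T'" unfolding T'_def using finT by simp
      have img: "sp l0 ` {Q\<in>N. refines S (sp l0 Q)} \<subseteq> T'"
        unfolding T'_def using spT by auto
      have "0 = (\<Sum>Q\<in>{Q\<in>N. refines S (sp l0 Q)}. m Q)" using rec0[OF S] seteq by simp
      also have "\<dots> = (\<Sum>S'\<in>T'. \<Sum>Q\<in>{Q\<in>{Q\<in>N. refines S (sp l0 Q)}. sp l0 Q = S'}. m Q)"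
        using sum.group[OF _ finT' img, of m] finN by simp
      also have "\<dots> = (\<Sum>S'\<in>T'. C S')"
      proof (rule sum.cong[OF refl])
        fix S' assume "S' \<in> T'"
        then have "refines S S'" unfolding T'_def by simp
        then have "{Q\<in>{Q\<in>N. refines S (sp l0 Q)}. sp l0 Q = S'} = {P\<in>N. sp l0 P = S'}" by auto
        then show "(\<Sum>Q\<in>{Q\<in>{Q\<in>N. refines S (sp l0 Q)}. sp l0 Q = S'}. m Q) = C S'"
          unfolding C_def by simp
      qed
      also have "\<dots> = C S + (\<Sum>S'\<in>T' - {S}. C S')"
      proof -
        have "S \<in> T'" unfolding T'_def using S refines_refl by simp
        then show ?thesis using sum.remove[OF finT'] by blast
      qed
      also have "(\<Sum>S'\<in>T' - {S}. C S') = 0"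
      proof (rule sum.neutral, rule ballI)
        fix S' assume S': "S' \<in> T' - {S}"
        then have S'T: "S' \<in> T" and r: "refines S S'" and ne: "S \<noteq> S'" unfolding T'_def by auto
        have S'N: "S' \<in> NC n" using S'T unfolding T_def N_def by simp
        have "card S' < card S"
          using refines_card_less[OF NC_part[OF SN] NC_part[OF S'N] _ r ne] by simp
        then show "C S' = 0" using less.IH[of "card S'"] cS S'T by simp
      qed
      finally show "C S = 0" by simp
    qed
  qed
  have G: "(\<Prod>V\<in>P. H V) = (\<Prod>V\<in>sp l0 P. H V)" if "P \<in> N" for P
    using prod_sp[of P n H l0] that H H0 unfolding N_def by blast
  have "(\<Sum>P\<in>N. (\<Prod>V\<in>P. H V) * m P)
      = (\<Sum>S\<in>T. \<Sum>P\<in>{P\<in>N. sp l0 P = S}. (\<Prod>V\<in>P. H V) * m P)"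
    using sum.group[OF finN finT, of "sp l0" "\<lambda>P. (\<Prod>V\<in>P. H V) * m P"] spT by fastforce
  also have "\<dots> = (\<Sum>S\<in>T. (\<Prod>V\<in>S. H V) * C S)"
  proof (rule sum.cong[OF refl])
    fix S assume S: "S \<in> T"
    have "(\<Sum>P\<in>{P\<in>N. sp l0 P = S}. (\<Prod>V\<in>P. H V) * m P)
        = (\<Sum>P\<in>{P\<in>N. sp l0 P = S}. (\<Prod>V\<in>S. H V) * m P)"
      using G by (intro sum.cong) auto
    then show "(\<Sum>P\<in>{P\<in>N. sp l0 P = S}. (\<Prod>V\<in>P. H V) * m P) = (\<Prod>V\<in>S. H V) * C S"
      unfolding C_def by (simp add: sum_distrib_left)
  qed
  also have "\<dots> = 0" using Czero by simp
  finally show ?thesis unfolding m_def N_def .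
qed

context
  fixes C :: "'a set" and ad mu :: "'a \<Rightarrow> 'a \<Rightarrow> 'a" and sm :: "complex \<Rightarrow> 'a \<Rightarrow> 'a"
    and z u :: 'a
  assumes alg: "unital_calg C ad mu sm z u"
begin

lemma A_z: "z \<in> C"
  using alg unfolding unital_calg_def by meson

lemma A_u: "u \<in> C"
  using alg unfolding unital_calg_def by meson

lemma A_ad: "a \<in> C \<Longrightarrow> b \<in> C \<Longrightarrow> ad a b \<in> C"
  using alg unfolding unital_calg_def by meson

lemma A_mu: "a \<in> C \<Longrightarrow> b \<in> C \<Longrightarrow> mu a b \<in> C"
  using alg unfolding unital_calg_def by meson

lemma A_sm: "a \<in> C \<Longrightarrow> sm c a \<in> C"
  using alg unfolding unital_calg_def by meson

lemma A_ul: "a \<in> C \<Longrightarrow> mu u a = a"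
  using alg unfolding unital_calg_def by meson

lemma A_smmul: "a \<in> C \<Longrightarrow> b \<in> C \<Longrightarrow> mu (sm c a) b = sm c (mu a b)"
  using alg unfolding unital_calg_def by meson

lemma A_mulsm: "a \<in> C \<Longrightarrow> b \<in> C \<Longrightarrow> mu a (sm c b) = sm c (mu a b)"
  using alg unfolding unital_calg_def by meson

lemma A_smsm: "a \<in> C \<Longrightarrow> sm (c * e) a = sm c (sm e a)"
  using alg unfolding unital_calg_def by meson

lemma A_smadd: "a \<in> C \<Longrightarrow> sm (c + e) a = ad (sm c a) (sm e a)"
  using alg unfolding unital_calg_def by meson

lemma A_inv: "a \<in> C \<Longrightarrow> \<exists>b\<in>C. ad a b = z"
  using alg unfolding unital_calg_def by meson

lemma A_assoc: "a \<in> C \<Longrightarrow> b \<in> C \<Longrightarrow> d \<in> C \<Longrightarrow> ad (ad a b) d = ad a (ad b d)"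
  using alg unfolding unital_calg_def by meson

lemma A_comm: "a \<in> C \<Longrightarrow> b \<in> C \<Longrightarrow> ad a b = ad b a"
  using alg unfolding unital_calg_def by meson

lemma A_z0: "a \<in> C \<Longrightarrow> ad z a = a"
  using alg unfolding unital_calg_def by meson

lemma A_sm0: assumes a: "a \<in> C" shows "sm 0 a = z"
proof -
  let ?w = "sm 0 a"
  have wC: "?w \<in> C" using A_sm[OF a] .
  have ww: "ad ?w ?w = ?w" using A_smadd[OF a, of 0 0] by simp
  obtain b where b: "b \<in> C" "ad ?w b = z" using A_inv[OF wC] by blast
  have assoc: "ad (ad ?w ?w) b = ad ?w (ad ?w b)" using A_assoc[OF wC wC b(1)] .
  have "z = ad ?w b" using b by simp
  also have "\<dots> = ad ?w (ad ?w b)" using ww assoc by simp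
  also have "\<dots> = ad ?w z" using b by simp
  also have "\<dots> = ad z ?w" using A_comm[OF wC A_z] .
  also have "\<dots> = ?w" using A_z0[OF wC] .
  finally show ?thesis by simp
qed

lemma foldr_C: "set xs \<subseteq> C \<Longrightarrow> w \<in> C \<Longrightarrow> foldr mu xs w \<in> C"
  by (induction xs) (auto intro: A_mu)

lemma foldr_sm: "set xs \<subseteq> C \<Longrightarrow> w \<in> C \<Longrightarrow> foldr mu xs (sm c w) = sm c (foldr mu xs w)"
  by (induction xs) (auto simp: A_mulsm foldr_C)

lemma block_lemma:
  fixes a b :: "nat \<Rightarrow> 'a"
  assumes V: "finite V" and aC: "\<And>l. l \<in> V \<Longrightarrow> a l \<in> C"
    and al0: "a lz = sm \<alpha> u" and b: "b = a(lz := u)"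
  shows "lz \<in> V \<Longrightarrow> foldr mu (map a (sorted_list_of_set V)) u
            = sm \<alpha> (foldr mu (map b (sorted_list_of_set V)) u)"
    and "foldr mu (map b (sorted_list_of_set V)) u
            = foldr mu (map b (sorted_list_of_set (V - {lz}))) u"
    and "lz \<notin> V \<Longrightarrow> map a (sorted_list_of_set V) = map b (sorted_list_of_set V)"
proof -
  have bC: "b l \<in> C" if "l \<in> V" for l using aC[OF that] A_u b by auto
  show "lz \<notin> V \<Longrightarrow> map a (sorted_list_of_set V) = map b (sorted_list_of_set V)"
    using V b by (auto intro!: map_cong)
  have main: "foldr mu (map a (sorted_list_of_set V)) u
            = sm \<alpha> (foldr mu (map b (sorted_list_of_set V)) u) \<and>
          foldr mu (map b (sorted_list_of_set V)) u
            = foldr mu (map b (sorted_list_of_set (V - {lz}))) u" if l: "lz \<in> V"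
  proof -
    have "lz \<in> set (sorted_list_of_set V)" using V l by simp
    then obtain ys zs where yz: "sorted_list_of_set V = ys @ lz # zs" using split_list by metis
    have dist: "distinct (ys @ lz # zs)" using yz[symmetric] by (metis distinct_sorted_list_of_set)
    then have ny: "lz \<notin> set ys" and nz: "lz \<notin> set zs" by auto
    have setV: "set ys \<subseteq> V" "set zs \<subseteq> V"
      using yz V by (metis Un_upper1 set_append set_sorted_list_of_set,
                     metis set_append set_sorted_list_of_set Un_upper2 set_subset_Cons subset_trans)
    have may: "map a ys = map b ys" using ny b by (auto intro!: map_cong)
    have maz: "map a zs = map b zs" using nz b by (auto intro!: map_cong)
    have ysC: "set (map b ys) \<subseteq> C" using setV bC by auto
    have zsC: "set (map b zs) \<subseteq> C" using setV bC by auto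
    define w where "w = foldr mu (map b zs) u"
    have wC: "w \<in> C" unfolding w_def using foldr_C[OF zsC A_u] .
    have "foldr mu (map a (sorted_list_of_set V)) u = foldr mu (map b ys) (mu (sm \<alpha> u) w)"
      unfolding yz w_def by (simp only: map_append list.map may maz al0 foldr_append foldr_Cons o_apply)
    also have "mu (sm \<alpha> u) w = sm \<alpha> w" using A_smmul[OF A_u wC] A_ul[OF wC] by simp
    also have "foldr mu (map b ys) (sm \<alpha> w) = sm \<alpha> (foldr mu (map b ys) w)"
      using foldr_sm[OF ysC wC] .
    finally have e1: "foldr mu (map a (sorted_list_of_set V)) u = sm \<alpha> (foldr mu (map b ys) w)" .
    have e2: "foldr mu (map b (sorted_list_of_set V)) u = foldr mu (map b ys) w"
      unfolding yz w_def using b A_ul[OF wC[unfolded w_def]] by simp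
    have "sorted_list_of_set (V - {lz}) = remove1 lz (sorted_list_of_set V)"
      using sorted_list_of_set_remove[OF V] .
    also have "\<dots> = ys @ zs" unfolding yz using ny by (simp add: remove1_append)
    finally have e3: "foldr mu (map b (sorted_list_of_set (V - {lz}))) u = foldr mu (map b ys) w"
      unfolding w_def by simp
    show ?thesis using e1 e2 e3 by simp
  qed
  show "lz \<in> V \<Longrightarrow> foldr mu (map a (sorted_list_of_set V)) u
            = sm \<alpha> (foldr mu (map b (sorted_list_of_set V)) u)" using main by blast
  show "foldr mu (map b (sorted_list_of_set V)) u
            = foldr mu (map b (sorted_list_of_set (V - {lz}))) u"
    using main by (cases "lz \<in> V") auto
qed

end

lemma gen_coord:
  fixes C :: "'i \<Rightarrow> 'a set"
  assumes alg: "\<And>j. unital_calg (C j) (ad j) (mu j) (sm j) (z j) (u j)"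
    and x: "x \<in> gen_alg_D ad mu sm z u (coord_embed C z c)"
  shows "(\<forall>i. x i \<in> C i) \<and> (\<forall>i. i \<noteq> c \<longrightarrow> (\<exists>\<alpha>. x i = sm i \<alpha> (u i)))"
  using x
proof (induction rule: gen_alg_D.induct)
  case (gen x)
  then show ?case unfolding coord_embed_def
    using A_z[OF alg] A_sm0[OF alg A_u[OF alg]] by (metis (mono_tags, lifting) mem_Collect_eq)
next
  case (scal d)
  then show ?case unfolding embD_def using A_sm[OF alg A_u[OF alg]] by blast
next
  case zero
  then show ?case using A_z[OF alg] A_sm0[OF alg A_u[OF alg]] by metis
next
  case (add x y)
  show ?case
  proof (intro conjI allI impI)
    fix i show "ad i (x i) (y i) \<in> C i" using add A_ad[OF alg] by blast
  next
    fix i assume "i \<noteq> c"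
    then obtain \<alpha> \<beta> where "x i = sm i \<alpha> (u i)" "y i = sm i \<beta> (u i)" using add by blast
    then have "ad i (x i) (y i) = sm i (\<alpha> + \<beta>) (u i)" using A_smadd[OF alg A_u[OF alg]] by simp
    then show "\<exists>\<gamma>. ad i (x i) (y i) = sm i \<gamma> (u i)" by blast
  qed
next
  case (mult x y)
  show ?case
  proof (intro conjI allI impI)
    fix i show "mu i (x i) (y i) \<in> C i" using mult A_mu[OF alg] by blast
  next
    fix i assume "i \<noteq> c"
    then obtain \<alpha> \<beta> where xy: "x i = sm i \<alpha> (u i)" "y i = sm i \<beta> (u i)" using mult by blast
    have uC: "u i \<in> C i" using A_u[OF alg] .
    have "mu i (sm i \<alpha> (u i)) (sm i \<beta> (u i)) = sm i \<alpha> (mu i (u i) (sm i \<beta> (u i)))"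
      using A_smmul[OF alg uC A_sm[OF alg uC]] .
    also have "\<dots> = sm i \<alpha> (sm i \<beta> (u i))" using A_ul[OF alg A_sm[OF alg uC]] by simp
    also have "\<dots> = sm i (\<alpha> * \<beta>) (u i)" using A_smsm[OF alg uC] by simp
    finally show "\<exists>\<gamma>. mu i (x i) (y i) = sm i \<gamma> (u i)" unfolding xy by blast
  qed
next
  case (smul x c')
  show ?case
  proof (intro conjI allI impI)
    fix i show "sm i c' (x i) \<in> C i" using smul A_sm[OF alg] by blast
  next
    fix i assume "i \<noteq> c"
    then obtain \<alpha> where xy: "x i = sm i \<alpha> (u i)" using smul by blast
    have "sm i c' (sm i \<alpha> (u i)) = sm i (c' * \<alpha>) (u i)" using A_smsm[OF alg A_u[OF alg]] by simp
    then show "\<exists>\<gamma>. sm i c' (x i) = sm i \<gamma> (u i)" unfolding xy by blast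
  qed
qed

theorem mainTheorem5:
  fixes C :: "'i::finite \<Rightarrow> 'a set"
    and ad mu :: "'i \<Rightarrow> 'a \<Rightarrow> 'a \<Rightarrow> 'a"
    and sm :: "'i \<Rightarrow> complex \<Rightarrow> 'a \<Rightarrow> 'a"
    and z u :: "'i \<Rightarrow> 'a"
    and phi :: "'i \<Rightarrow> 'a \<Rightarrow> complex"
  assumes "\<And>j. nc_prob_space (C j) (ad j) (mu j) (sm j) (z j) (u j) (phi j)"
  shows "free_over_D ad mu sm z u phi (coord_embed C z)"
proof -
  have alg: "\<And>j. unital_calg (C j) (ad j) (mu j) (sm j) (z j) (u j)"
    using assms unfolding nc_prob_space_def by blast
  have phi_sm: "\<And>j c' x. x \<in> C j \<Longrightarrow> phi j (sm j c' x) = c' * phi j x"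
    using assms unfolding nc_prob_space_def by blast
  have phi_u: "\<And>j. phi j (u j) = 1"
    using assms unfolding nc_prob_space_def by blast
  show ?thesis unfolding free_over_D_def
  proof (intro allI impI)
    fix n and c :: "nat \<Rightarrow> 'i" and y
    assume h: "(\<forall>l<n. y l \<in> gen_alg_D ad mu sm z u (coord_embed C z (c l))) \<and>
        (\<exists>l1<n. \<exists>l2<n. c l1 \<noteq> c l2)"
    then have yg: "\<And>l. l < n \<Longrightarrow> y l \<in> gen_alg_D ad mu sm z u (coord_embed C z (c l))" by blast
    obtain l1 l2 where l12: "l1 < n" "l2 < n" "c l1 \<noteq> c l2" using h by blast
    have n2: "n \<ge> 2"
    proof -
      have "l1 \<noteq> l2" using l12 by auto
      then show ?thesis using l12 by linarith
    qed
    show "cumulant mu u phi n y = (\<lambda>_. 0)"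
    proof (rule ext)
      fix j
      obtain l0 where l0: "l0 < n" "c l0 \<noteq> j"
        using l12 by (cases "c l1 = j") auto
      define a where "a l = y l j" for l
      have aC: "a l \<in> C j" if "l < n" for l
        using gen_coord[OF alg yg[OF that]] unfolding a_def by blast
      obtain \<alpha> where al0: "a l0 = sm j \<alpha> (u j)"
        using gen_coord[OF alg yg[OF l0(1)]] l0(2) unfolding a_def by metis
      define b where "b = a(l0 := u j)"
      have bC: "b l \<in> C j" if "l < n" for l
        using aC[OF that] A_u[OF alg] unfolding b_def by auto
      define H where "H V = phi j (foldr (mu j) (map b (sorted_list_of_set (V \<inter> {0..<n}))) (u j))" for V
      have HV: "H V = H (V - {l0})" for V
      proof -
        have e: "(V - {l0}) \<inter> {0..<n} = (V \<inter> {0..<n}) - {l0}" by auto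
        have "foldr (mu j) (map b (sorted_list_of_set (V \<inter> {0..<n}))) (u j)
            = foldr (mu j) (map b (sorted_list_of_set ((V \<inter> {0..<n}) - {l0}))) (u j)"
          using block_lemma(2)[OF alg, where V="V \<inter> {0..<n}" and a=a and lz=l0 and b=b] aC al0 b_def by auto
        then show ?thesis unfolding H_def e by simp
      qed
      have H0: "H {} = 1" unfolding H_def using phi_u by simp
      have blk: "(\<Prod>V\<in>P. condE phi (ordprodA mu u y V) j) = \<alpha> * (\<Prod>V\<in>P. H V)"
        if P: "P \<in> NC n" for P
      proof -
        have PA: "partition_on {0..<n} P" using NC_part[OF P] .
        have finP: "finite P" using finite_elements[OF _ PA] by simp
        have sub: "V \<subseteq> {0..<n}" if "V \<in> P" for V using partition_onD1[OF PA] that by blast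
        have finV: "finite V" if "V \<in> P" for V using sub[OF that] finite_subset by blast
        have "l0 \<in> {0..<n}" using l0(1) by simp
        then have "l0 \<in> \<Union>P" using partition_onD1[OF PA] by simp
        then obtain V0 where V0: "V0 \<in> P" "l0 \<in> V0" by blast
        define f where "f V = condE phi (ordprodA mu u y V) j" for V
        have f_eq: "f V = phi j (foldr (mu j) (map a (sorted_list_of_set V)) (u j))" for V
          unfolding f_def condE_def ordprodA_def a_def by simp
        have HV': "H V = phi j (foldr (mu j) (map b (sorted_list_of_set V)) (u j))" if "V \<in> P" for V
        proof -
          have "V \<inter> {0..<n} = V" using sub[OF that] by blast
          then show ?thesis unfolding H_def by simp
        qed
        have aCV: "\<And>l. l \<in> V \<Longrightarrow> a l \<in> C j" if "V \<in> P" for V using aC sub[OF that] by auto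
        have fV0: "f V0 = \<alpha> * H V0"
        proof -
          have "foldr (mu j) (map a (sorted_list_of_set V0)) (u j)
              = sm j \<alpha> (foldr (mu j) (map b (sorted_list_of_set V0)) (u j))"
            using block_lemma(1)[OF alg finV[OF V0(1)] aCV[OF V0(1)] al0 b_def V0(2)] .
          moreover have "foldr (mu j) (map b (sorted_list_of_set V0)) (u j) \<in> C j"
          proof (rule foldr_C[OF alg _ A_u[OF alg]])
            show "set (map b (sorted_list_of_set V0)) \<subseteq> C j"
              using bC sub[OF V0(1)] finV[OF V0(1)] by auto
          qed
          ultimately show ?thesis unfolding f_eq HV'[OF V0(1)] using phi_sm by simp
        qed
        have fV: "f V = H V" if V: "V \<in> P - {V0}" for V
        proof -
          have "l0 \<notin> V" using part_unique[OF PA, of l0 V V0] V V0 by auto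
          then have "map a (sorted_list_of_set V) = map b (sorted_list_of_set V)"
            using block_lemma(3)[OF alg finV[of V] aCV[of V] al0 b_def] V by blast
          note m = this
          have VP: "V \<in> P" using V by simp
          show ?thesis unfolding f_eq HV'[OF VP] m by (rule refl)
        qed
        have "(\<Prod>V\<in>P. f V) = f V0 * (\<Prod>V\<in>P - {V0}. f V)" using prod.remove[OF finP V0(1)] .
        also have "(\<Prod>V\<in>P - {V0}. f V) = (\<Prod>V\<in>P - {V0}. H V)" using fV by (rule prod.cong[OF refl])
        also have "f V0 * (\<Prod>V\<in>P - {V0}. H V) = \<alpha> * (H V0 * (\<Prod>V\<in>P - {V0}. H V))"
          using fV0 by simp
        also have "H V0 * (\<Prod>V\<in>P - {V0}. H V) = (\<Prod>V\<in>P. H V)"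
          using prod.remove[OF finP V0(1), of H] by simp
        finally show ?thesis unfolding f_def .
      qed
      have "cumulant mu u phi n y j
          = (\<Sum>P\<in>NC n. (\<alpha> * (\<Prod>V\<in>P. H V)) * of_int (mobius_NC n P))"
        unfolding cumulant_def using blk by (intro sum.cong) auto
      also have "\<dots> = \<alpha> * (\<Sum>P\<in>NC n. (\<Prod>V\<in>P. H V) * of_int (mobius_NC n P))"
        by (simp add: sum_distrib_left mult.assoc)
      also have "(\<Sum>P\<in>NC n. (\<Prod>V\<in>P. H V) * of_int (mobius_NC n P)) = 0"
        using sum_mob_zero[OF n2 l0(1), of H] HV H0 by blast
      finally show "cumulant mu u phi n y j = 0" by simp
    qed
  qed
qed

end
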